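(* Let $G$ be an amenable locally compact group with left Haar measure $m$, and let $(A_i)_{i\in\mathbb I}$ be a net in $\mathcal K_p$. The following are equivalent: (i) $(A_i)$ is a strong Følner net; (ii) $(A_i)$ is a Følner net and there is an open unit neighborhood $O$ with $\lim_{i} m\big(\bigcap_{o\in O} oA_i\big)/m(A_i)=1$; (iii) $(A_i)$ is a Følner net and for every compact symmetric unit neighborhood $K$, $\lim_{i} m\big(\bigcap_{k\in K} kA_i\big)/m(A_i)=1$; (iv) for all $K,L\in\mathcal K$, $\lim_i m(L\delta^KA_i)/m(A_i)=0$; (v) for all $K,L\in\mathcal K$, $\lim_i m(L\partial^KA_i)/m(A_i)=0$; (vi) for all $K,L\in\mathcal K$, $\lim_i m(L\partial_KA_i)/m(A_i)=0$. Moreover, these equivalences continue to hold if in any of (iv), (v), (vi) the condition "$K,L\in\mathcal K$" is replaced by "$K,L\in\mathcal K_{s0}$". In particular, $(A_i)$ is a van Hove net if and only if it is a strong Følner net. If $G$ is additionally discrete, then every Følner net is a strong Følner net.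
   Context: $\mathcal K$: nonempty compact subsets of $G$; $\mathcal K_p$: those of positive Haar measure; $\mathcal K_{s0}$: compact sets that are symmetric and contain the identity. Nets are indexed by a directed partially ordered set $(\mathbb I,\prec)$. For $K,A\subseteq G$, with $A^c=G\setminus A$: Følner boundary $\delta^KA=KA\,\triangle\, A$; van Hove boundary $\partial^KA=(KA\cap \overline{A^c})\cup (K^{-1} \overline{A^c}\cap A)$; strong Følner boundary $\partial_K A=K^{-1}A\cap K^{-1}A^c$. A net $(A_i)$ in $\mathcal K_p$ is a Følner net (resp. van Hove net, strong Følner net) if for every $K\in\mathcal K$, $\lim_i m(\delta^KA_i)/m(A_i)=0$ (resp. $\lim_i m(\partial^KA_i)/m(A_i)=0$, $\lim_i m(\partial_KA_i)/m(A_i)=0$). $G$ is amenable if it admits a left-invariant mean on $L^\infty(G)$. *)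

theory Defs
  imports "HOL-Analysis.Analysis"
begin

text \<open>The locally compact group G is a type 'g of class
topological_group_add (a possibly non-commutative topological group written
additively: the product g h is g + h, the identity is 0, the inverse is - g),
Hausdorff (t2_space) and locally compact.\<close>

definition locally_compact_group :: "'g::{topological_group_add,t2_space} itself \<Rightarrow> bool" where
  "locally_compact_group _ \<longleftrightarrow> locally_compact_space (euclidean :: 'g topology)"

definition left_haar_measure :: "'g::{topological_group_add,t2_space} measure \<Rightarrow> bool" where
  "left_haar_measure m \<longleftrightarrow>
     sets m = sets borel \<and>
     (\<forall>K. compact K \<longrightarrow> emeasure m K < \<infinity>) \<and>
     (\<forall>U. open U \<and> U \<noteq> {} \<longrightarrow> emeasure m U > 0) \<and>
     (\<forall>g A. A \<in> sets borel \<longrightarrow> emeasure m ((\<lambda>x. g + x) ` A) = emeasure m A) \<and>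
     (\<forall>A \<in> sets borel. emeasure m A = (INF U \<in> {U. open U \<and> A \<subseteq> U}. emeasure m U)) \<and>
     (\<forall>U. open U \<longrightarrow> emeasure m U = (SUP K \<in> {K. compact K \<and> K \<subseteq> U}. emeasure m K))"

text \<open>Outer measure induced by m (agrees with m on Borel sets by outer regularity);
used to measure sets such as L(KA \<triangle> A) whose Borel measurability is not evident.\<close>

definition outer_haar :: "'g::topological_space measure \<Rightarrow> 'g set \<Rightarrow> ennreal" where
  "outer_haar m X = (INF U \<in> {U. open U \<and> X \<subseteq> U}. emeasure m U)"

definition ess_bounded :: "'g::topological_space measure \<Rightarrow> ('g \<Rightarrow> real) \<Rightarrow> bool" where
  "ess_bounded m f \<longleftrightarrow> f \<in> borel_measurable m \<and> (\<exists>C. AE x in m. \<bar>f x\<bar> \<le> C)"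

definition amenable :: "'g::{topological_group_add,t2_space} measure \<Rightarrow> bool" where
  "amenable m \<longleftrightarrow> (\<exists>\<mu> :: ('g \<Rightarrow> real) \<Rightarrow> real.
      (\<forall>f g a b. ess_bounded m f \<and> ess_bounded m g \<longrightarrow>
          \<mu> (\<lambda>x. a * f x + b * g x) = a * \<mu> f + b * \<mu> g) \<and>
      (\<forall>f. ess_bounded m f \<and> (AE x in m. f x \<ge> 0) \<longrightarrow> \<mu> f \<ge> 0) \<and>
      (\<forall>f g. ess_bounded m f \<and> ess_bounded m g \<and> (AE x in m. f x = g x) \<longrightarrow> \<mu> f = \<mu> g) \<and>
      \<mu> (\<lambda>_. 1) = 1 \<and>
      (\<forall>f s. ess_bounded m f \<longrightarrow> \<mu> (\<lambda>x. f (s + x)) = \<mu> f))"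

definition directed_po :: "('i \<Rightarrow> 'i \<Rightarrow> bool) \<Rightarrow> bool" where
  "directed_po le \<longleftrightarrow> (\<forall>i. le i i) \<and> (\<forall>i j k. le i j \<and> le j k \<longrightarrow> le i k) \<and>
     (\<forall>i j. le i j \<and> le j i \<longrightarrow> i = j) \<and> (\<forall>i j. \<exists>k. le i k \<and> le j k)"

definition net_filter :: "('i \<Rightarrow> 'i \<Rightarrow> bool) \<Rightarrow> 'i filter" where
  "net_filter le = (INF i. principal {j. le i j})"

definition setmul :: "'g::group_add set \<Rightarrow> 'g set \<Rightarrow> 'g set" where
  "setmul K A = (\<Union>k\<in>K. (\<lambda>a. k + a) ` A)"

definition setinv :: "'g::group_add set \<Rightarrow> 'g set" where
  "setinv K = uminus ` K"

definition folner_bd :: "'g::group_add set \<Rightarrow> 'g set \<Rightarrow> 'g set" where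
  "folner_bd K A = (setmul K A - A) \<union> (A - setmul K A)"

definition vanhove_bd :: "'g::{group_add,topological_space} set \<Rightarrow> 'g set \<Rightarrow> 'g set" where
  "vanhove_bd K A = (setmul K A \<inter> closure (- A)) \<union> (setmul (setinv K) (closure (- A)) \<inter> A)"

definition strong_bd :: "'g::group_add set \<Rightarrow> 'g set \<Rightarrow> 'g set" where
  "strong_bd K A = setmul (setinv K) A \<inter> setmul (setinv K) (- A)"

definition cK :: "'g::topological_space set set" where
  "cK = {K. compact K \<and> K \<noteq> {}}"

definition cKp :: "'g::topological_space measure \<Rightarrow> 'g set set" where
  "cKp m = {K. compact K \<and> K \<noteq> {} \<and> emeasure m K > 0}"

definition cKs0 :: "'g::{group_add,topological_space} set set" where
  "cKs0 = {K. compact K \<and> setinv K = K \<and> 0 \<in> K}"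

definition rel :: "'g::topological_space measure \<Rightarrow> 'g set \<Rightarrow> 'g set \<Rightarrow> real" where
  "rel m X A = enn2real (outer_haar m X) / enn2real (emeasure m A)"

definition folner_net :: "'g::{group_add,topological_space} measure \<Rightarrow> ('i \<Rightarrow> 'i \<Rightarrow> bool) \<Rightarrow> ('i \<Rightarrow> 'g set) \<Rightarrow> bool" where
  "folner_net m le A \<longleftrightarrow> (\<forall>K\<in>cK. ((\<lambda>i. rel m (folner_bd K (A i)) (A i)) \<longlongrightarrow> 0) (net_filter le))"

definition vanhove_net :: "'g::{group_add,topological_space} measure \<Rightarrow> ('i \<Rightarrow> 'i \<Rightarrow> bool) \<Rightarrow> ('i \<Rightarrow> 'g set) \<Rightarrow> bool" where
  "vanhove_net m le A \<longleftrightarrow> (\<forall>K\<in>cK. ((\<lambda>i. rel m (vanhove_bd K (A i)) (A i)) \<longlongrightarrow> 0) (net_filter le))"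

definition strong_folner_net :: "'g::{group_add,topological_space} measure \<Rightarrow> ('i \<Rightarrow> 'i \<Rightarrow> bool) \<Rightarrow> ('i \<Rightarrow> 'g set) \<Rightarrow> bool" where
  "strong_folner_net m le A \<longleftrightarrow> (\<forall>K\<in>cK. ((\<lambda>i. rel m (strong_bd K (A i)) (A i)) \<longlongrightarrow> 0) (net_filter le))"

text \<open>Conditions (ii)-(vi); the flag S selects the class of K, L:
S = cK for the original, S = cKs0 for the variant.\<close>

definition cond_ii :: "'g::{group_add,topological_space} measure \<Rightarrow> ('i \<Rightarrow> 'i \<Rightarrow> bool) \<Rightarrow> ('i \<Rightarrow> 'g set) \<Rightarrow> bool" where
  "cond_ii m le A \<longleftrightarrow> folner_net m le A \<and>
     (\<exists>V. open V \<and> 0 \<in> V \<and>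
        ((\<lambda>i. rel m (\<Inter>v\<in>V. (\<lambda>a. v + a) ` A i) (A i)) \<longlongrightarrow> 1) (net_filter le))"

definition cond_iii :: "'g::{group_add,topological_space} measure \<Rightarrow> ('i \<Rightarrow> 'i \<Rightarrow> bool) \<Rightarrow> ('i \<Rightarrow> 'g set) \<Rightarrow> bool" where
  "cond_iii m le A \<longleftrightarrow> folner_net m le A \<and>
     (\<forall>K. compact K \<and> setinv K = K \<and> 0 \<in> interior K \<longrightarrow>
        ((\<lambda>i. rel m (\<Inter>k\<in>K. (\<lambda>a. k + a) ` A i) (A i)) \<longlongrightarrow> 1) (net_filter le))"

definition cond_iv :: "'g::{group_add,topological_space} set set \<Rightarrow> 'g measure \<Rightarrow> ('i \<Rightarrow> 'i \<Rightarrow> bool) \<Rightarrow> ('i \<Rightarrow> 'g set) \<Rightarrow> bool" where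
  "cond_iv S m le A \<longleftrightarrow> (\<forall>K\<in>S. \<forall>L\<in>S.
     ((\<lambda>i. rel m (setmul L (folner_bd K (A i))) (A i)) \<longlongrightarrow> 0) (net_filter le))"

definition cond_v :: "'g::{group_add,topological_space} set set \<Rightarrow> 'g measure \<Rightarrow> ('i \<Rightarrow> 'i \<Rightarrow> bool) \<Rightarrow> ('i \<Rightarrow> 'g set) \<Rightarrow> bool" where
  "cond_v S m le A \<longleftrightarrow> (\<forall>K\<in>S. \<forall>L\<in>S.
     ((\<lambda>i. rel m (setmul L (vanhove_bd K (A i))) (A i)) \<longlongrightarrow> 0) (net_filter le))"

definition cond_vi :: "'g::{group_add,topological_space} set set \<Rightarrow> 'g measure \<Rightarrow> ('i \<Rightarrow> 'i \<Rightarrow> bool) \<Rightarrow> ('i \<Rightarrow> 'g set) \<Rightarrow> bool" where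
  "cond_vi S m le A \<longleftrightarrow> (\<forall>K\<in>S. \<forall>L\<in>S.
     ((\<lambda>i. rel m (setmul L (strong_bd K (A i))) (A i)) \<longlongrightarrow> 0) (net_filter le))"

end

theory Submission
  imports Defs
begin


lemma setmul_iff: "x \<in> setmul K A \<longleftrightarrow> (\<exists>k\<in>K. \<exists>a\<in>A. x = k + a)"
  unfolding setmul_def by auto

lemma setinv_iff: "x \<in> setinv K \<longleftrightarrow> - x \<in> K"
  unfolding setinv_def by (auto intro: image_eqI[where x="-x"])

lemma neg_plus_eq_iff: "(x = - k + a) \<longleftrightarrow> (k + x = (a::'a::group_add))"
proof
  assume "x = - k + a" then show "k + x = a" by (simp add: add.assoc[symmetric])
next
  assume "k + x = a"
  then have "- k + a = - k + (k + x)" by simp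
  then show "x = - k + a" by (simp add: add.assoc[symmetric])
qed

lemma setmul_inv_iff: "x \<in> setmul (setinv K) A \<longleftrightarrow> (\<exists>k\<in>K. k + x \<in> A)"
proof
  assume "x \<in> setmul (setinv K) A"
  then obtain k a where ka: "k \<in> K" "a \<in> A" "x = -k + a" unfolding setmul_def setinv_def by auto
  then have "k + x = a" by (simp add: neg_plus_eq_iff)
  then show "\<exists>k\<in>K. k + x \<in> A" using ka by blast
next
  assume "\<exists>k\<in>K. k + x \<in> A"
  then obtain k where k: "k \<in> K" "k + x \<in> A" by auto
  have "x = -k + (k + x)" by (simp add: add.assoc[symmetric])
  then show "x \<in> setmul (setinv K) A" unfolding setmul_def setinv_def using k by blast
qed

lemma strong_bd_iff: "x \<in> strong_bd K A \<longleftrightarrow> (\<exists>k\<in>K. k + x \<in> A) \<and> (\<exists>k\<in>K. k + x \<notin> A)"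
  unfolding strong_bd_def by (simp add: setmul_inv_iff)

lemma setmul_mono: "L \<subseteq> L' \<Longrightarrow> X \<subseteq> X' \<Longrightarrow> setmul L X \<subseteq> setmul L' X'"
  unfolding setmul_def by blast

lemma compact_setmul:
  fixes K A :: "'g::{topological_group_add,t2_space} set"
  assumes "compact K" "compact A" shows "compact (setmul K A)"
proof -
  have "setmul K A = (\<lambda>p. fst p + snd p) ` (K \<times> A)"
    unfolding setmul_def by force
  moreover have "compact ((\<lambda>p. fst p + snd p) ` (K \<times> A))"
    by (intro compact_continuous_image compact_Times assms continuous_intros)
  ultimately show ?thesis by simp
qed

lemma compact_setinv:
  fixes K :: "'g::{topological_group_add,t2_space} set"
  assumes "compact K" shows "compact (setinv K)"
  unfolding setinv_def by (intro compact_continuous_image assms continuous_intros)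

lemma open_transl:
  fixes V :: "'g::topological_group_add set"
  assumes "open V" shows "open ((\<lambda>x. g + x) ` V)"
proof -
  have "(\<lambda>x. g + x) ` V = (\<lambda>x. - g + x) -` V"
    by (auto simp: image_iff) (metis add_minus_cancel)
  moreover have "open ((\<lambda>x. - g + x) -` V)"
    by (intro continuous_open_vimage assms continuous_intros)
  ultimately show ?thesis by simp
qed

lemma closed_transl:
  fixes V :: "'g::topological_group_add set"
  assumes "closed V" shows "closed ((\<lambda>x. g + x) ` V)"
proof -
  have "(\<lambda>x. g + x) ` V = (\<lambda>x. - g + x) -` V"
    by (auto simp: image_iff) (metis add_minus_cancel)
  moreover have "closed ((\<lambda>x. - g + x) -` V)"
    by (intro continuous_closed_vimage assms continuous_intros)
  ultimately show ?thesis by simp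
qed

lemma borel_transl:
  fixes V :: "'g::{topological_group_add} set"
  assumes "V \<in> sets borel" shows "(\<lambda>x. g + x) ` V \<in> sets borel"
proof -
  have "(\<lambda>x. g + x) ` V = (\<lambda>x. - g + x) -` V \<inter> space borel"
    by (auto simp: image_iff) (metis add_minus_cancel)
  moreover have "(\<lambda>x. - g + x) \<in> borel_measurable borel"
    by (intro borel_measurable_continuous_onI continuous_intros)
  ultimately show ?thesis using assms by (metis measurable_sets)
qed

lemma open_uminus_vimage:
  fixes V :: "'g::topological_group_add set"
  assumes "open V" shows "open (setinv V)"
proof -
  have "setinv V = uminus -` V" by (auto simp: setinv_iff)
  moreover have "open (uminus -` V)"
    by (intro continuous_open_vimage assms continuous_intros)
  ultimately show ?thesis by simp
qed

lemma closure_right_transl: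
  fixes S :: "'g::topological_group_add set"
  assumes "x \<in> closure S" "open V" "0 \<in> V"
  shows "\<exists>v\<in>V. v + x \<in> S"
proof -
  have o: "open ((\<lambda>y. y + - x) -` V)"
    by (intro continuous_open_vimage assms continuous_intros)
  have "x \<in> (\<lambda>y. y + - x) -` V" using assms by simp
  then have "(\<lambda>y. y + - x) -` V \<inter> closure S \<noteq> {}" using assms by blast
  then have "(\<lambda>y. y + - x) -` V \<inter> S \<noteq> {}" using open_Int_closure_eq_empty[OF o] by blast
  then obtain y where "y \<in> S" "y + - x \<in> V" by auto
  then show ?thesis by (intro bexI[of _ "y + - x"]) (auto simp: add.assoc)
qed




definition bnd :: "'g::topological_space set \<Rightarrow> bool" where
  "bnd X \<longleftrightarrow> (\<exists>C. compact C \<and> X \<subseteq> C)"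

lemma bnd_subset: "bnd Y \<Longrightarrow> X \<subseteq> Y \<Longrightarrow> bnd X"
  unfolding bnd_def by blast

lemma bnd_Un: "bnd (X::'g::t2_space set) \<Longrightarrow> bnd Y \<Longrightarrow> bnd (X \<union> Y)"
  unfolding bnd_def by (meson Un_mono compact_Un)

lemma bnd_UN: "finite I \<Longrightarrow> (\<And>i. i \<in> I \<Longrightarrow> bnd (X i :: 'g::t2_space set)) \<Longrightarrow> bnd (\<Union>i\<in>I. X i)"
proof (induction I rule: finite_induct)
  case empty then show ?case by (auto simp: bnd_def)
next
  case (insert x F) then show ?case by (simp add: bnd_Un)
qed

lemma outer_mono: "X \<subseteq> Y \<Longrightarrow> outer_haar m X \<le> outer_haar m Y"
  unfolding outer_haar_def by (rule INF_superset_mono) auto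

lemma outer_borel:
  assumes "left_haar_measure m" "X \<in> sets borel"
  shows "outer_haar m X = emeasure m X"
  using assms unfolding left_haar_measure_def outer_haar_def by auto

lemma compact_borel: "compact (C::'g::t2_space set) \<Longrightarrow> C \<in> sets borel"
  by (simp add: borel_closed compact_imp_closed)

lemma outer_fin:
  fixes m :: "'g::{topological_group_add,t2_space} measure"
  assumes "left_haar_measure m" "bnd X"
  shows "outer_haar m X < \<infinity>"
proof -
  obtain C where C: "compact C" "X \<subseteq> C" using assms unfolding bnd_def by auto
  have "outer_haar m X \<le> outer_haar m C" using C outer_mono by blast
  also have "\<dots> = emeasure m C" using outer_borel[OF assms(1) compact_borel[OF C(1)]] .
  also have "\<dots> < \<infinity>" using assms C unfolding left_haar_measure_def by auto
  finally show ?thesis .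
qed

lemma outer_Un:
  fixes m :: "'g::{topological_group_add,t2_space} measure"
  assumes H: "left_haar_measure m"
  shows "outer_haar m (X \<union> Y) \<le> outer_haar m X + outer_haar m Y"
proof (rule ennreal_le_epsilon)
  fix e :: real assume fin: "outer_haar m X + outer_haar m Y < top" and e: "0 < e"
  have sm: "sets m = sets borel" using H unfolding left_haar_measure_def by auto
  have fx: "outer_haar m X < top" "outer_haar m Y < top" using fin by (auto simp: top_unique)
  have e2: "0 < e/2" using e by simp
  have "outer_haar m X < outer_haar m X + ennreal (e/2)"
    using fx e2 using ennreal_add_left_cancel_less[of "outer_haar m _" 0 "ennreal (e/2)"] by (simp add: top.not_eq_extremum)
  then obtain U where U: "open U" "X \<subseteq> U" "emeasure m U < outer_haar m X + ennreal (e/2)"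
    unfolding outer_haar_def[of m X] by (auto simp: INF_less_iff)
  have "outer_haar m Y < outer_haar m Y + ennreal (e/2)"
    using fx e2 using ennreal_add_left_cancel_less[of "outer_haar m _" 0 "ennreal (e/2)"] by (simp add: top.not_eq_extremum)
  then obtain V where V: "open V" "Y \<subseteq> V" "emeasure m V < outer_haar m Y + ennreal (e/2)"
    unfolding outer_haar_def[of m Y] by (auto simp: INF_less_iff)
  have "outer_haar m (X \<union> Y) \<le> emeasure m (U \<union> V)"
    unfolding outer_haar_def using U V by (intro INF_lower) auto
  also have "\<dots> \<le> emeasure m U + emeasure m V"
    using U V sm by (intro emeasure_subadditive) auto
  also have "\<dots> \<le> (outer_haar m X + ennreal (e/2)) + (outer_haar m Y + ennreal (e/2))"
    using U V by (intro add_mono) auto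
  also have "\<dots> = outer_haar m X + outer_haar m Y + ennreal e"
    using e by (simp add: algebra_simps flip: ennreal_plus)
  finally show "outer_haar m (X \<union> Y) \<le> outer_haar m X + outer_haar m Y + ennreal e" .
qed

lemma rel_nonneg: "0 \<le> rel m X A"
  unfolding rel_def by simp

lemma rel_mono:
  fixes m :: "'g::{topological_group_add,t2_space} measure"
  assumes H: "left_haar_measure m" and "X \<subseteq> Y" "bnd Y"
  shows "rel m X A \<le> rel m Y A"
proof -
  have "enn2real (outer_haar m X) \<le> enn2real (outer_haar m Y)"
    using outer_mono[OF assms(2)] outer_fin[OF H assms(3)] by (simp add: enn2real_mono)
  then show ?thesis unfolding rel_def by (simp add: divide_right_mono)
qed

lemma rel_Un:
  fixes m :: "'g::{topological_group_add,t2_space} measure"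
  assumes H: "left_haar_measure m" and "X \<subseteq> Y \<union> Z" "bnd Y" "bnd Z"
  shows "rel m X A \<le> rel m Y A + rel m Z A"
proof -
  have fY: "outer_haar m Y < top" and fZ: "outer_haar m Z < top"
    using outer_fin[OF H] assms by auto
  have "outer_haar m X \<le> outer_haar m Y + outer_haar m Z"
    using outer_mono[OF assms(2)] outer_Un[OF H] order_trans by blast
  then have "enn2real (outer_haar m X) \<le> enn2real (outer_haar m Y + outer_haar m Z)"
    using fY fZ by (intro enn2real_mono) auto
  also have "\<dots> = enn2real (outer_haar m Y) + enn2real (outer_haar m Z)"
    using fY fZ by (simp add: enn2real_plus)
  finally show ?thesis unfolding rel_def by (simp add: divide_right_mono add_divide_distrib[symmetric])
qed

lemma rel_UN:
  fixes m :: "'g::{topological_group_add,t2_space} measure"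
  assumes H: "left_haar_measure m" and "finite I"
  shows "X \<subseteq> (\<Union>i\<in>I. Y i) \<Longrightarrow> (\<And>i. i \<in> I \<Longrightarrow> bnd (Y i)) \<Longrightarrow> rel m X A \<le> (\<Sum>i\<in>I. rel m (Y i) A)"
  using assms(2)
proof (induction I arbitrary: X rule: finite_induct)
  case empty
  have "outer_haar m {} \<le> emeasure m {}"
    unfolding outer_haar_def by (intro INF_lower) auto
  then have "outer_haar m X = 0" using empty by simp
  then show ?case by (simp add: rel_def)
next
  case (insert x F)
  have "rel m X A \<le> rel m (Y x) A + rel m (\<Union>i\<in>F. Y i) A"
    using insert by (intro rel_Un[OF H]) (auto intro: bnd_UN)
  also have "\<dots> \<le> rel m (Y x) A + (\<Sum>i\<in>F. rel m (Y i) A)"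
    using insert by (intro add_left_mono insert.IH) auto
  finally show ?case using insert by simp
qed

lemma rel_self:
  fixes m :: "'g::{topological_group_add,t2_space} measure"
  assumes H: "left_haar_measure m" and "A \<in> cKp m"
  shows "rel m A A = 1"
proof -
  have c: "compact A" "emeasure m A > 0" using assms(2) unfolding cKp_def by auto
  have "emeasure m A < \<infinity>" using H c unfolding left_haar_measure_def by auto
  then have "enn2real (emeasure m A) > 0" using c by (simp add: enn2real_positive_iff)
  then show ?thesis unfolding rel_def using outer_borel[OF H compact_borel[OF c(1)]] by simp
qed

lemma tendsto_rel_mono:
  fixes m :: "'g::{topological_group_add,t2_space} measure"
  assumes H: "left_haar_measure m" and "\<And>i. X i \<subseteq> Y i" "\<And>i. bnd (Y i)"
    and "((\<lambda>i. rel m (Y i) (A i)) \<longlongrightarrow> 0) F"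
  shows "((\<lambda>i. rel m (X i) (A i)) \<longlongrightarrow> 0) F"
  by (rule tendsto_sandwich[OF _ _ tendsto_const assms(4)])
     (auto intro!: always_eventually rel_nonneg rel_mono[OF H] assms(2,3))




lemma setmulI: "k \<in> K \<Longrightarrow> a \<in> A \<Longrightarrow> k + a \<in> setmul K A"
  by (auto simp: setmul_iff)

lemma setinvI: "l \<in> L \<Longrightarrow> - l \<in> setinv L"
  by (auto simp: setinv_iff)

lemma incl_a:
  assumes "setmul K (setinv L) \<subseteq> K'"
  shows "setmul L (strong_bd K A) \<subseteq> strong_bd K' (A::'g::group_add set)"
proof
  fix x assume "x \<in> setmul L (strong_bd K A)"
  then obtain l y where l: "l \<in> L" and x: "x = l + y" and y: "y \<in> strong_bd K A"
    by (auto simp: setmul_iff)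
  from y obtain k1 k2 where k: "k1 \<in> K" "k1 + y \<in> A" "k2 \<in> K" "k2 + y \<notin> A"
    by (auto simp: strong_bd_iff)
  have m: "k + - l \<in> K'" if "k \<in> K" for k
    using assms that l by (meson setmulI setinvI subsetD)
  have e: "(k + - l) + x = k + y" for k by (simp add: x add.assoc[symmetric])
  show "x \<in> strong_bd K' A"
    unfolding strong_bd_iff using m[OF k(1)] m[OF k(3)] e k by metis
qed

lemma incl_a0:
  assumes "0 \<in> L" "K \<subseteq> K'"
  shows "strong_bd K A \<subseteq> setmul L (strong_bd K' (A::'g::group_add set))"
  using assms by (force simp: setmul_iff strong_bd_iff)

lemma incl_b:
  assumes "K \<noteq> {}" "0 \<in> K'" "setinv K \<subseteq> K'"
  shows "folner_bd K A \<subseteq> strong_bd K' (A::'g::group_add set)"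
proof
  fix x assume "x \<in> folner_bd K A"
  then consider "x \<in> setmul K A" "x \<notin> A" | "x \<in> A" "x \<notin> setmul K A"
    unfolding folner_bd_def by auto
  then show "x \<in> strong_bd K' A"
  proof cases
    case 1
    then obtain k a where "k \<in> K" "a \<in> A" "x = k + a" by (auto simp: setmul_iff)
    then have "-k \<in> K'" "-k + x \<in> A" using assms by (auto simp: setinvI subsetD add.assoc[symmetric])
    then show ?thesis using 1 assms(2) unfolding strong_bd_iff by (metis add_0)
  next
    case 2
    obtain k where k: "k \<in> K" using assms by auto
    have "-k + x \<notin> A"
    proof
      assume "-k + x \<in> A"
      then have "k + (-k + x) \<in> setmul K A" using k by (intro setmulI)
      then show False using 2 by (simp add: add.assoc[symmetric])
    qed
    moreover have "-k \<in> K'" using k assms by (meson setinvI subsetD)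
    ultimately show ?thesis using 2 assms(2) unfolding strong_bd_iff by (metis add_0)
  qed
qed

lemma incl_c:
  fixes A :: "'g::topological_group_add set"
  assumes "0 \<in> K'" "setinv K \<subseteq> K'" "V \<subseteq> K'" "setmul V K \<subseteq> K'" "open V" "0 \<in> V"
  shows "vanhove_bd K A \<subseteq> strong_bd K' A"
proof
  fix x assume "x \<in> vanhove_bd K A"
  then consider "x \<in> setmul K A" "x \<in> closure (- A)" | "x \<in> setmul (setinv K) (closure (- A))" "x \<in> A"
    unfolding vanhove_bd_def by auto
  then show "x \<in> strong_bd K' A"
  proof cases
    case 1
    then obtain k a where "k \<in> K" "a \<in> A" "x = k + a" by (auto simp: setmul_iff)
    then have a: "-k \<in> K'" "-k + x \<in> A" using assms by (auto simp: setinvI subsetD add.assoc[symmetric])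
    obtain v where "v \<in> V" "v + x \<in> - A" using closure_right_transl[OF 1(2) assms(5,6)] by auto
    then show ?thesis using a assms(3) unfolding strong_bd_iff by auto
  next
    case 2
    then obtain k where k: "k \<in> K" "k + x \<in> closure (- A)" by (auto simp: setmul_inv_iff)
    obtain v where v: "v \<in> V" "v + (k + x) \<in> - A" using closure_right_transl[OF k(2) assms(5,6)] by auto
    have "v + k \<in> K'" using assms(4) v k by (meson setmulI subsetD)
    then show ?thesis using 2 assms(1) v unfolding strong_bd_iff by (metis add_0 add.assoc ComplD)
  qed
qed

lemma incl_d:
  fixes A :: "'g::{topological_group_add} set"
  assumes "setinv K \<subseteq> L" "setmul K (setinv K) \<subseteq> K''"
  shows "strong_bd K A \<subseteq> setmul L (vanhove_bd K'' A)"
proof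
  fix x assume "x \<in> strong_bd K A"
  then obtain k k' where k: "k \<in> K" "k + x \<in> A" "k' \<in> K" "k' + x \<notin> A"
    by (auto simp: strong_bd_iff)
  define y where "y = k + x"
  have j: "k' + - k \<in> K''" using assms(2) k by (meson setmulI setinvI subsetD)
  have "(k' + - k) + y = k' + x" by (simp add: y_def add.assoc[symmetric])
  then have "y \<in> setmul (setinv K'') (closure (- A))"
    using j k closure_subset[of "- A"] unfolding setmul_inv_iff by force
  then have "y \<in> vanhove_bd K'' A" using k y_def unfolding vanhove_bd_def by auto
  moreover have "-k \<in> L" using assms(1) k by (auto simp: setinv_iff)
  moreover have "x = -k + y" by (simp add: y_def add.assoc[symmetric])
  ultimately show "x \<in> setmul L (vanhove_bd K'' A)" by (auto simp: setmul_iff)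
qed

lemma incl_e:
  fixes A :: "'g::group_add set"
  assumes "setinv K \<subseteq> L" "setmul K (setinv K) \<subseteq> K''"
  shows "strong_bd K A \<subseteq> setmul L (folner_bd K'' A)"
proof
  fix x assume "x \<in> strong_bd K A"
  then obtain k k' where k: "k \<in> K" "k + x \<in> A" "k' \<in> K" "k' + x \<notin> A"
    by (auto simp: strong_bd_iff)
  define z where "z = k' + x"
  have j: "k' + - k \<in> K''" using assms(2) k by (meson setmulI setinvI subsetD)
  have "z = (k' + - k) + (k + x)" by (simp add: z_def add.assoc[symmetric])
  then have "z \<in> setmul K'' A" using j k by (auto simp: setmul_iff)
  then have "z \<in> folner_bd K'' A" using k z_def unfolding folner_bd_def by auto
  moreover have "-k' \<in> L" using assms(1) k by (auto simp: setinv_iff)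
  moreover have "x = -k' + z" by (simp add: z_def add.assoc[symmetric])
  ultimately show "x \<in> setmul L (folner_bd K'' A)" by (auto simp: setmul_iff)
qed

lemma incl_f:
  fixes A :: "'g::{topological_group_add} set"
  assumes "L \<subseteq> K''" "setinv L \<subseteq> K''" "setmul L K \<subseteq> K''" "setmul K (setinv L) \<subseteq> K''"
  shows "setmul L (vanhove_bd K A) \<subseteq> vanhove_bd K'' A"
proof
  fix x assume "x \<in> setmul L (vanhove_bd K A)"
  then obtain l y where l: "l \<in> L" and x: "x = l + y" and y: "y \<in> vanhove_bd K A"
    by (auto simp: setmul_iff)
  have cl: "x \<in> closure (- A)" if "x \<notin> A" using that closure_subset[of "- A"] by auto
  from y consider "y \<in> setmul K A" "y \<in> closure (- A)" | "y \<in> setmul (setinv K) (closure (- A))" "y \<in> A"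
    unfolding vanhove_bd_def by auto
  then show "x \<in> vanhove_bd K'' A"
  proof cases
    case 1
    then obtain k a where ka: "k \<in> K" "a \<in> A" "y = k + a" by (auto simp: setmul_iff)
    show ?thesis
    proof (cases "x \<in> A")
      case True
      have "-l \<in> K''" using assms(2) l by (auto simp: setinv_iff)
      moreover have "-l + x = y" by (simp add: x add.assoc[symmetric])
      ultimately have "x \<in> setmul (setinv K'') (closure (- A))" using 1 unfolding setmul_inv_iff by auto
      then show ?thesis using True unfolding vanhove_bd_def by auto
    next
      case False
      have "l + k \<in> K''" using assms(3) l ka by (meson setmulI subsetD)
      moreover have "x = (l + k) + a" by (simp add: x ka add.assoc)
      ultimately have "x \<in> setmul K'' A" using ka by (auto simp: setmul_iff)
      then show ?thesis using cl[OF False] unfolding vanhove_bd_def by auto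
    qed
  next
    case 2
    then obtain k where k: "k \<in> K" "k + y \<in> closure (- A)" by (auto simp: setmul_inv_iff)
    show ?thesis
    proof (cases "x \<in> A")
      case True
      have "k + - l \<in> K''" using assms(4) l k by (meson setmulI setinvI subsetD)
      moreover have "(k + - l) + x = k + y" by (simp add: x add.assoc[symmetric])
      ultimately have "x \<in> setmul (setinv K'') (closure (- A))" using k unfolding setmul_inv_iff by metis
      then show ?thesis using True unfolding vanhove_bd_def by auto
    next
      case False
      have "x \<in> setmul K'' A" using assms(1) l 2 x by (auto simp: setmul_iff)
      then show ?thesis using cl[OF False] unfolding vanhove_bd_def by auto
    qed
  qed
qed

lemma incl_g:
  assumes "0 \<in> K'" "setinv K \<subseteq> K'"
  shows "A - (\<Inter>k\<in>K. (\<lambda>a. k + a) ` A) \<subseteq> strong_bd K' (A::'g::group_add set)"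
proof
  fix x assume "x \<in> A - (\<Inter>k\<in>K. (\<lambda>a. k + a) ` A)"
  then obtain k where k: "k \<in> K" "x \<notin> (\<lambda>a. k + a) ` A" "x \<in> A" by auto
  have "-k + x \<notin> A" using k(2) by (metis add_minus_cancel image_eqI)
  moreover have "-k \<in> K'" using k assms by (meson setinvI subsetD)
  ultimately show "x \<in> strong_bd K' A" using k assms unfolding strong_bd_iff by (metis add_0)
qed




definition sym0 :: "'g::group_add set \<Rightarrow> 'g set" where
  "sym0 K = insert 0 (K \<union> setinv K)"

lemma setinv_setinv: "setinv (setinv K) = (K::'g::group_add set)"
  by (auto simp: setinv_iff)

lemma setinv_sym0: "setinv (sym0 K) = sym0 (K::'g::group_add set)"
  unfolding sym0_def by (auto simp: setinv_iff)

lemma sym0_sub: "K \<subseteq> sym0 K" "setinv K \<subseteq> sym0 K" "0 \<in> sym0 K"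
  unfolding sym0_def by auto

lemma compact_sym0:
  assumes "compact (K::'g::{topological_group_add,t2_space} set)" shows "compact (sym0 K)"
  unfolding sym0_def by (rule compact_insert, rule compact_Un[OF assms compact_setinv[OF assms]])

lemma sym0_cKs0: "compact (K::'g::{topological_group_add,t2_space} set) \<Longrightarrow> sym0 K \<in> cKs0"
  unfolding cKs0_def by (simp add: compact_sym0 setinv_sym0 sym0_sub)

lemma cKs0_cK: "cKs0 \<subseteq> cK"
  unfolding cKs0_def cK_def by auto

lemma sym0_cK: "compact (K::'g::{topological_group_add,t2_space} set) \<Longrightarrow> sym0 K \<in> cK"
  using sym0_cKs0 cKs0_cK by blast

lemma bnd_compact: "compact C \<Longrightarrow> bnd C"
  unfolding bnd_def by auto

lemma bnd_setmul: "bnd (X::'g::{topological_group_add,t2_space} set) \<Longrightarrow> compact L \<Longrightarrow> bnd (setmul L X)"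
  unfolding bnd_def by (meson compact_setmul order_refl setmul_mono)

lemma bnd_strong: "compact K \<Longrightarrow> compact A \<Longrightarrow> bnd (strong_bd K (A::'g::{topological_group_add,t2_space} set))"
  unfolding bnd_def strong_bd_def by (meson compact_setinv compact_setmul inf_le1)

lemma bnd_folner: "compact K \<Longrightarrow> compact A \<Longrightarrow> bnd (folner_bd K (A::'g::{topological_group_add,t2_space} set))"
  unfolding bnd_def folner_bd_def
  by (intro exI[of _ "setmul K A \<union> A"]) (auto intro: compact_setmul compact_Un)

lemma bnd_vanhove: "compact K \<Longrightarrow> compact A \<Longrightarrow> bnd (vanhove_bd K (A::'g::{topological_group_add,t2_space} set))"
  unfolding bnd_def vanhove_bd_def
  by (intro exI[of _ "setmul K A \<union> A"]) (auto intro: compact_setmul compact_Un)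

lemma cKp_compact: "A \<in> cKp m \<Longrightarrow> compact A"
  unfolding cKp_def by auto

lemma lc_nbhd:
  assumes "locally_compact_group TYPE('g::{topological_group_add,t2_space})"
  obtains V U :: "'g::{topological_group_add,t2_space} set" where "open V" "0 \<in> V" "V \<subseteq> U" "compact U"
  using assms unfolding locally_compact_group_def locally_compact_space_def
  by (metis UNIV_I compactin_euclidean_iff open_openin topspace_euclidean)

lemma rel_transl_diff:
  fixes m :: "'g::{topological_group_add,t2_space} measure"
  assumes H: "left_haar_measure m" and A: "A \<in> cKp m" and B: "closed B" "B \<subseteq> A"
  shows "rel m ((\<lambda>x. g + x) ` (A - B)) A = 1 - rel m B A"
proof -
  have sm: "sets m = sets borel" using H unfolding left_haar_measure_def by auto
  have cA: "compact A" and pA: "emeasure m A > 0" using A unfolding cKp_def by auto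
  have fA: "emeasure m A < \<infinity>" using H cA unfolding left_haar_measure_def by auto
  have bA: "A \<in> sets borel" by (rule compact_borel[OF cA])
  have bB: "B \<in> sets borel" using B by (simp add: borel_closed)
  have bD: "A - B \<in> sets borel" using bA bB by auto
  have t: "emeasure m ((\<lambda>x. g + x) ` (A - B)) = emeasure m (A - B)"
    using H bD unfolding left_haar_measure_def by auto
  have o1: "outer_haar m ((\<lambda>x. g + x) ` (A - B)) = emeasure m (A - B)"
    using outer_borel[OF H borel_transl[OF bD]] t by simp
  have o2: "outer_haar m B = emeasure m B" using outer_borel[OF H bB] .
  have sum: "emeasure m B + emeasure m (A - B) = emeasure m A"
    using plus_emeasure[of B m "A - B"] sm bB bD B by (simp add: Un_absorb1 Un_Diff_cancel)
  have fB: "emeasure m B < \<infinity>" and fD: "emeasure m (A - B) < \<infinity>"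
    using sum fA by (metis add.commute ennreal_add_eq_top top.not_eq_extremum infinity_ennreal_def)+
  have "enn2real (emeasure m A) = enn2real (emeasure m B + emeasure m (A - B))"
    using sum by simp
  also have "\<dots> = enn2real (emeasure m B) + enn2real (emeasure m (A - B))"
    using fB fD by (intro enn2real_plus) (auto simp: infinity_ennreal_def)
  finally have e1: "enn2real (emeasure m A) = enn2real (emeasure m B) + enn2real (emeasure m (A - B))" .
  have e2: "enn2real (emeasure m A) > 0" using pA fA by (simp add: enn2real_positive_iff)
  define a where "a = enn2real (emeasure m A)"
  define b where "b = enn2real (emeasure m B)"
  define d where "d = enn2real (emeasure m (A - B))"
  have ab: "a = b + d" "a > 0" unfolding a_def b_def d_def by (rule e1, rule e2)
  have "d / a = 1 - b / a" using ab by (simp add: field_simps)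
  then show ?thesis unfolding rel_def o1 o2 a_def[symmetric] b_def[symmetric] d_def[symmetric] .
qed




lemma cK_iff: "K \<in> cK \<longleftrightarrow> compact K \<and> K \<noteq> {}"
  unfolding cK_def by auto

lemma setmul_ne: "K \<noteq> {} \<Longrightarrow> L \<noteq> {} \<Longrightarrow> setmul K L \<noteq> {}"
  unfolding setmul_def by auto

lemma setinv_ne: "K \<noteq> {} \<Longrightarrow> setinv K \<noteq> {}"
  unfolding setinv_def by auto

lemma cK_setmul: "K \<in> cK \<Longrightarrow> L \<in> cK \<Longrightarrow> setmul K L \<in> (cK::'g::{topological_group_add,t2_space} set set)"
  unfolding cK_iff by (simp add: compact_setmul setmul_ne)

lemma cK_setinv: "K \<in> cK \<Longrightarrow> setinv K \<in> (cK::'g::{topological_group_add,t2_space} set set)"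
  unfolding cK_iff by (simp add: compact_setinv setinv_ne)

lemma cK_Un: "K \<in> cK \<Longrightarrow> L \<in> cK \<Longrightarrow> K \<union> L \<in> (cK::'g::{topological_group_add,t2_space} set set)"
  unfolding cK_iff by (simp add: compact_Un)

lemma cK_insert: "compact K \<Longrightarrow> insert x K \<in> (cK::'g::{topological_group_add,t2_space} set set)"
  unfolding cK_iff by (simp add: compact_insert)

lemma cK_compact: "K \<in> cK \<Longrightarrow> compact K"
  unfolding cK_iff by blast

lemma cK_sing: "{x} \<in> (cK::'g::{topological_group_add,t2_space} set set)"
  unfolding cK_iff by simp

context
  fixes m :: "'g::{topological_group_add,t2_space} measure"
    and le :: "'i \<Rightarrow> 'i \<Rightarrow> bool"
    and A :: "'i \<Rightarrow> 'g set"
  assumes H: "left_haar_measure m" and Ai: "\<forall>i. A i \<in> cKp m"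
begin

lemma cA: "compact (A i)" using Ai cKp_compact by blast

lemma strong_vi:
  assumes "strong_folner_net m le A" "S \<subseteq> cK"
  shows "cond_vi S m le A"
  unfolding cond_vi_def
proof (intro ballI)
  fix K L assume "K \<in> S" "L \<in> S"
  then have K: "compact K" "K \<noteq> {}" and L: "compact L" "L \<noteq> {}" using assms(2) by (auto simp: cK_iff)
  define K' where "K' = setmul K (setinv L)"
  have KL: "K \<in> cK" "L \<in> cK" using K L by (auto simp: cK_iff)
  have "K' \<in> cK" unfolding K'_def by (intro cK_setmul cK_setinv KL)
  then have t: "((\<lambda>i. rel m (strong_bd K' (A i)) (A i)) \<longlongrightarrow> 0) (net_filter le)"
    using assms(1) unfolding strong_folner_net_def by auto
  have inc: "setmul L (strong_bd K (A i)) \<subseteq> strong_bd K' (A i)" for i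
    by (rule incl_a) (simp add: K'_def)
  show "((\<lambda>i. rel m (setmul L (strong_bd K (A i))) (A i)) \<longlongrightarrow> 0) (net_filter le)"
    by (rule tendsto_rel_mono[OF H inc _ t]) (intro bnd_strong cA cK_compact \<open>K' \<in> cK\<close>)
qed

lemma vi_strong:
  assumes "cond_vi S m le A" "\<forall>K\<in>cK. sym0 K \<in> S"
  shows "strong_folner_net m le A"
  unfolding strong_folner_net_def
proof (intro ballI)
  fix K :: "'g set" assume K: "K \<in> cK"
  have s1: "sym0 K \<in> S" "sym0 {0} \<in> S" using assms(2) K by (auto simp: cK_iff)
  then have t: "((\<lambda>i. rel m (setmul (sym0 {0}) (strong_bd (sym0 K) (A i))) (A i)) \<longlongrightarrow> 0) (net_filter le)"
    using assms(1) unfolding cond_vi_def by auto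
  have inc: "strong_bd K (A i) \<subseteq> setmul (sym0 {0}) (strong_bd (sym0 K) (A i))" for i
    by (rule incl_a0[OF sym0_sub(3) sym0_sub(1)])
  have cs: "compact (sym0 K)" "compact (sym0 {0::'g})" using K compact_sym0[OF compact_sing] by (auto intro!: compact_sym0 simp: cK_iff)
  show "((\<lambda>i. rel m (strong_bd K (A i)) (A i)) \<longlongrightarrow> 0) (net_filter le)"
    by (rule tendsto_rel_mono[OF H inc _ t]) (intro bnd_setmul bnd_strong cA cs)
qed

lemma strong_iv:
  assumes "strong_folner_net m le A" "S \<subseteq> cK"
  shows "cond_iv S m le A"
  unfolding cond_iv_def
proof (intro ballI)
  fix K L assume "K \<in> S" "L \<in> S"
  then have K: "compact K" "K \<noteq> {}" and L: "compact L" "L \<noteq> {}" using assms(2) by (auto simp: cK_iff)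
  define K1 where "K1 = insert 0 (setinv K)"
  define K2 where "K2 = setmul K1 (setinv L)"
  have KL: "K \<in> cK" "L \<in> cK" using K L by (auto simp: cK_iff)
  have "K2 \<in> cK" unfolding K2_def K1_def
    by (intro cK_setmul cK_setinv KL cK_insert compact_setinv K(1))
  then have t: "((\<lambda>i. rel m (strong_bd K2 (A i)) (A i)) \<longlongrightarrow> 0) (net_filter le)"
    using assms(1) unfolding strong_folner_net_def by auto
  have inc: "setmul L (folner_bd K (A i)) \<subseteq> strong_bd K2 (A i)" for i
  proof -
    have "setmul L (folner_bd K (A i)) \<subseteq> setmul L (strong_bd K1 (A i))"
      by (intro setmul_mono order_refl incl_b) (use K in \<open>auto simp: K1_def\<close>)
    also have "\<dots> \<subseteq> strong_bd K2 (A i)" by (rule incl_a) (simp add: K2_def)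
    finally show ?thesis .
  qed
  show "((\<lambda>i. rel m (setmul L (folner_bd K (A i))) (A i)) \<longlongrightarrow> 0) (net_filter le)"
    by (rule tendsto_rel_mono[OF H inc _ t]) (intro bnd_strong cA cK_compact \<open>K2 \<in> cK\<close>)
qed

lemma iv_strong:
  assumes "cond_iv S m le A" "\<forall>K\<in>cK. sym0 K \<in> S"
  shows "strong_folner_net m le A"
  unfolding strong_folner_net_def
proof (intro ballI)
  fix K :: "'g set" assume K: "K \<in> cK"
  define K'' where "K'' = sym0 (setmul K (setinv K))"
  have cK'': "compact K''" unfolding K''_def
    by (intro compact_sym0 cK_compact cK_setmul cK_setinv K)
  have s1: "sym0 K \<in> S" "K'' \<in> S" using assms(2) K cK_setmul[OF K cK_setinv[OF K]] unfolding K''_def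
    by auto
  then have t: "((\<lambda>i. rel m (setmul (sym0 K) (folner_bd K'' (A i))) (A i)) \<longlongrightarrow> 0) (net_filter le)"
    using assms(1) unfolding cond_iv_def by auto
  have inc: "strong_bd K (A i) \<subseteq> setmul (sym0 K) (folner_bd K'' (A i))" for i
    by (rule incl_e) (auto simp: K''_def sym0_sub)
  show "((\<lambda>i. rel m (strong_bd K (A i)) (A i)) \<longlongrightarrow> 0) (net_filter le)"
    by (rule tendsto_rel_mono[OF H inc _ t]) (intro bnd_setmul bnd_folner cA compact_sym0 cK'' cK_compact K)
qed

lemma strong_vanhove:
  fixes V U K :: "'g set"
  assumes "strong_folner_net m le A" "open V" "0 \<in> V" "V \<subseteq> U" "compact U" "compact K" "K \<noteq> {}"
  shows "((\<lambda>i. rel m (vanhove_bd K (A i)) (A i)) \<longlongrightarrow> 0) (net_filter le)"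
proof -
  define K3 where "K3 = insert 0 (setinv K \<union> U \<union> setmul U K)"
  have "K3 \<in> cK" unfolding K3_def
    by (intro cK_insert compact_Un compact_setmul compact_setinv assms(5,6))
  then have t: "((\<lambda>i. rel m (strong_bd K3 (A i)) (A i)) \<longlongrightarrow> 0) (net_filter le)"
    using assms(1) unfolding strong_folner_net_def by auto
  have inc: "vanhove_bd K (A i) \<subseteq> strong_bd K3 (A i)" for i
    by (rule incl_c[OF _ _ _ _ assms(2,3)]) (use assms(4) setmul_mono[OF assms(4) order_refl[of K]] in \<open>auto simp: K3_def\<close>)
  show ?thesis
    by (rule tendsto_rel_mono[OF H inc _ t]) (intro bnd_strong cA cK_compact \<open>K3 \<in> cK\<close>)
qed

lemma strong_v:
  fixes V U :: "'g set"
  assumes "strong_folner_net m le A" "S \<subseteq> cK" "open V" "0 \<in> V" "V \<subseteq> U" "compact U"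
  shows "cond_v S m le A"
  unfolding cond_v_def
proof (intro ballI)
  fix K L assume "K \<in> S" "L \<in> S"
  then have K: "compact K" "K \<noteq> {}" and L: "compact L" "L \<noteq> {}" using assms(2) by (auto simp: cK_iff)
  define K2 where "K2 = L \<union> setinv L \<union> setmul L K \<union> setmul K (setinv L)"
  have cK2: "compact K2" "K2 \<noteq> {}" unfolding K2_def using K L
    by (auto intro!: compact_Un compact_setmul compact_setinv)
  have t: "((\<lambda>i. rel m (vanhove_bd K2 (A i)) (A i)) \<longlongrightarrow> 0) (net_filter le)"
    by (rule strong_vanhove[OF assms(1,3,4,5,6) cK2])
  have inc: "setmul L (vanhove_bd K (A i)) \<subseteq> vanhove_bd K2 (A i)" for i
    by (rule incl_f) (auto simp: K2_def)
  show "((\<lambda>i. rel m (setmul L (vanhove_bd K (A i))) (A i)) \<longlongrightarrow> 0) (net_filter le)"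
    by (rule tendsto_rel_mono[OF H inc _ t]) (intro bnd_vanhove cA cK2)
qed

lemma v_strong:
  assumes "cond_v S m le A" "\<forall>K\<in>cK. sym0 K \<in> S"
  shows "strong_folner_net m le A"
  unfolding strong_folner_net_def
proof (intro ballI)
  fix K :: "'g set" assume K: "K \<in> cK"
  define K'' where "K'' = sym0 (setmul K (setinv K))"
  have cK'': "compact K''" unfolding K''_def
    by (intro compact_sym0 cK_compact cK_setmul cK_setinv K)
  have s1: "sym0 K \<in> S" "K'' \<in> S" using assms(2) K cK_setmul[OF K cK_setinv[OF K]] unfolding K''_def
    by auto
  then have t: "((\<lambda>i. rel m (setmul (sym0 K) (vanhove_bd K'' (A i))) (A i)) \<longlongrightarrow> 0) (net_filter le)"
    using assms(1) unfolding cond_v_def by auto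
  have inc: "strong_bd K (A i) \<subseteq> setmul (sym0 K) (vanhove_bd K'' (A i))" for i
    by (rule incl_d) (auto simp: K''_def sym0_sub)
  show "((\<lambda>i. rel m (strong_bd K (A i)) (A i)) \<longlongrightarrow> 0) (net_filter le)"
    by (rule tendsto_rel_mono[OF H inc _ t]) (intro bnd_setmul bnd_vanhove cA compact_sym0 cK'' cK_compact K)
qed

lemma vanhove_strong:
  assumes "vanhove_net m le A"
  shows "strong_folner_net m le A"
  unfolding strong_folner_net_def
proof (intro ballI)
  fix K :: "'g set" assume K: "K \<in> cK"
  then have cK: "compact K" "K \<noteq> {}" by (auto simp: cK_iff)
  define L where "L = setinv K"
  define K'' where "K'' = setmul K (setinv K)"
  define K2 where "K2 = L \<union> setinv L \<union> setmul L K'' \<union> setmul K'' (setinv L)"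
  have cK'': "compact K''" unfolding K''_def by (intro compact_setmul compact_setinv cK(1))
  have cL: "compact L" using cK by (simp add: L_def compact_setinv)
  have cK2: "compact K2" unfolding K2_def
    by (intro compact_Un compact_setmul compact_setinv cK'' cL)
  have ne2: "K2 \<noteq> {}" unfolding K2_def L_def using cK(2) setinv_ne by blast
  have t: "((\<lambda>i. rel m (vanhove_bd K2 (A i)) (A i)) \<longlongrightarrow> 0) (net_filter le)"
    using assms cK2 ne2 unfolding vanhove_net_def by (auto simp: cK_iff)
  have inc: "strong_bd K (A i) \<subseteq> vanhove_bd K2 (A i)" for i
  proof -
    have "strong_bd K (A i) \<subseteq> setmul L (vanhove_bd K'' (A i))"
      by (rule incl_d) (auto simp: L_def K''_def)
    also have "\<dots> \<subseteq> vanhove_bd K2 (A i)" by (rule incl_f) (auto simp: K2_def)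
    finally show ?thesis .
  qed
  show "((\<lambda>i. rel m (strong_bd K (A i)) (A i)) \<longlongrightarrow> 0) (net_filter le)"
    by (rule tendsto_rel_mono[OF H inc _ t]) (intro bnd_vanhove cA cK2)
qed

lemma strong_folner:
  assumes "strong_folner_net m le A"
  shows "folner_net m le A"
  unfolding folner_net_def
proof (intro ballI)
  fix K :: "'g set" assume K: "K \<in> cK"
  then have cK: "compact K" "K \<noteq> {}" by (auto simp: cK_iff)
  define K1 where "K1 = insert 0 (setinv K)"
  have "K1 \<in> cK" unfolding K1_def by (intro cK_insert compact_setinv cK(1))
  then have t: "((\<lambda>i. rel m (strong_bd K1 (A i)) (A i)) \<longlongrightarrow> 0) (net_filter le)"
    using assms unfolding strong_folner_net_def by auto
  have inc: "folner_bd K (A i) \<subseteq> strong_bd K1 (A i)" for i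
    by (rule incl_b) (use cK in \<open>auto simp: K1_def\<close>)
  show "((\<lambda>i. rel m (folner_bd K (A i)) (A i)) \<longlongrightarrow> 0) (net_filter le)"
    by (rule tendsto_rel_mono[OF H inc _ t]) (intro bnd_strong cA cK_compact \<open>K1 \<in> cK\<close>)
qed

end




context
  fixes m :: "'g::{topological_group_add,t2_space} measure"
    and le :: "'i \<Rightarrow> 'i \<Rightarrow> bool"
    and A :: "'i \<Rightarrow> 'g set"
  assumes H: "left_haar_measure m" and Ai: "\<forall>i. A i \<in> cKp m"
begin

lemma cA': "compact (A i)" using Ai cKp_compact by blast

lemma relA: "rel m (A i) (A i) = 1" using rel_self[OF H] Ai by blast

lemma strong_iii:
  assumes "strong_folner_net m le A"
  shows "cond_iii m le A"
  unfolding cond_iii_def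
proof (intro conjI allI impI)
  show "folner_net m le A" by (rule strong_folner[OF H Ai assms])
  fix K :: "'g set" assume K: "compact K \<and> setinv K = K \<and> 0 \<in> interior K"
  then have K0: "0 \<in> K" using interior_subset by blast
  define K1 where "K1 = insert 0 (setinv K)"
  have "K1 \<in> cK" unfolding K1_def cK_iff using K by (auto intro: compact_setinv)
  then have t: "((\<lambda>i. rel m (strong_bd K1 (A i)) (A i)) \<longlongrightarrow> 0) (net_filter le)"
    using assms unfolding strong_folner_net_def by auto
  define I where "I i = (\<Inter>k\<in>K. (\<lambda>a. k + a) ` A i)" for i
  have IA: "I i \<subseteq> A i" for i unfolding I_def using K0 by auto
  have bA: "bnd (A i)" for i by (rule bnd_compact[OF cA'])
  have bI: "bnd (I i)" for i using bnd_subset[OF bA IA] .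
  have lo: "1 - rel m (strong_bd K1 (A i)) (A i) \<le> rel m (I i) (A i)" for i
  proof -
    have "A i \<subseteq> I i \<union> strong_bd K1 (A i)"
      using incl_g[of K1 K "A i"] unfolding I_def K1_def by auto
    then have "rel m (A i) (A i) \<le> rel m (I i) (A i) + rel m (strong_bd K1 (A i)) (A i)"
      by (rule rel_Un[OF H _ bI]) (use \<open>K1 \<in> cK\<close> in \<open>auto intro: bnd_strong cA' simp: cK_iff\<close>)
    then show ?thesis using relA by simp
  qed
  have up: "rel m (I i) (A i) \<le> 1" for i
  proof -
    have "rel m (I i) (A i) \<le> rel m (A i) (A i)" by (rule rel_mono[OF H IA bA])
    then show ?thesis using relA by simp
  qed
  have "((\<lambda>i. 1 - rel m (strong_bd K1 (A i)) (A i)) \<longlongrightarrow> 1 - 0) (net_filter le)"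
    by (intro tendsto_diff tendsto_const t)
  then have tl: "((\<lambda>i. 1 - rel m (strong_bd K1 (A i)) (A i)) \<longlongrightarrow> 1) (net_filter le)" by simp
  have ev1: "\<forall>\<^sub>F i in net_filter le. 1 - rel m (strong_bd K1 (A i)) (A i) \<le> rel m (I i) (A i)"
    by (intro always_eventually allI lo)
  have ev2: "\<forall>\<^sub>F i in net_filter le. rel m (I i) (A i) \<le> 1"
    by (intro always_eventually allI up)
  have "((\<lambda>i. rel m (I i) (A i)) \<longlongrightarrow> 1) (net_filter le)"
    by (rule tendsto_sandwich[OF ev1 ev2 tl tendsto_const])
  then show "((\<lambda>i. rel m (\<Inter>k\<in>K. (\<lambda>a. k + a) ` A i) (A i)) \<longlongrightarrow> 1) (net_filter le)"
    unfolding I_def .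
qed

lemma iii_ii:
  assumes LC: "locally_compact_group TYPE('g)" and c: "cond_iii m le A"
  shows "cond_ii m le A"
proof -
  obtain V U :: "'g set" where VU: "open V" "0 \<in> V" "V \<subseteq> U" "compact U"
    using lc_nbhd[OF LC] by blast
  define Kc where "Kc = U \<inter> setinv U"
  define W where "W = V \<inter> setinv V"
  have cKc: "compact Kc" unfolding Kc_def using VU by (intro compact_Int compact_setinv) auto
  have sKc: "setinv Kc = Kc" unfolding Kc_def by (auto simp: setinv_iff)
  have oW: "open W" unfolding W_def using VU by (intro open_Int open_uminus_vimage) auto
  have W0: "0 \<in> W" unfolding W_def using VU by (auto simp: setinv_iff)
  have WK: "W \<subseteq> Kc" unfolding W_def Kc_def using VU by (auto simp: setinv_iff)
  have "0 \<in> interior Kc" using interior_maximal[OF WK oW] W0 by blast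
  then have t: "((\<lambda>i. rel m (\<Inter>k\<in>Kc. (\<lambda>a. k + a) ` A i) (A i)) \<longlongrightarrow> 1) (net_filter le)"
    using c cKc sKc unfolding cond_iii_def by blast
  have fol: "folner_net m le A" using c unfolding cond_iii_def by blast
  have bA: "bnd (A i)" for i by (rule bnd_compact[OF cA'])
  have WA: "(\<Inter>k\<in>W. (\<lambda>a. k + a) ` A i) \<subseteq> A i" for i using W0 by auto
  have lo: "rel m (\<Inter>k\<in>Kc. (\<lambda>a. k + a) ` A i) (A i) \<le> rel m (\<Inter>k\<in>W. (\<lambda>a. k + a) ` A i) (A i)" for i
    by (rule rel_mono[OF H _ bnd_subset[OF bA WA]]) (use WK in auto)
  have up: "rel m (\<Inter>k\<in>W. (\<lambda>a. k + a) ` A i) (A i) \<le> 1" for i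
  proof -
    have "rel m (\<Inter>k\<in>W. (\<lambda>a. k + a) ` A i) (A i) \<le> rel m (A i) (A i)" by (rule rel_mono[OF H WA bA])
    then show ?thesis using relA by simp
  qed
  have ev1: "\<forall>\<^sub>F i in net_filter le. rel m (\<Inter>k\<in>Kc. (\<lambda>a. k + a) ` A i) (A i) \<le> rel m (\<Inter>k\<in>W. (\<lambda>a. k + a) ` A i) (A i)"
    by (intro always_eventually allI lo)
  have ev2: "\<forall>\<^sub>F i in net_filter le. rel m (\<Inter>k\<in>W. (\<lambda>a. k + a) ` A i) (A i) \<le> 1"
    by (intro always_eventually allI up)
  have "((\<lambda>i. rel m (\<Inter>k\<in>W. (\<lambda>a. k + a) ` A i) (A i)) \<longlongrightarrow> 1) (net_filter le)"
    by (rule tendsto_sandwich[OF ev1 ev2 t tendsto_const])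
  then show ?thesis unfolding cond_ii_def using fol oW W0 by blast
qed

lemma ii_strong:
  assumes c: "cond_ii m le A"
  shows "strong_folner_net m le A"
proof -
  from c obtain Ov where fol: "folner_net m le A" and Ov: "open Ov" "0 \<in> Ov"
    and tB: "((\<lambda>i. rel m (\<Inter>v\<in>Ov. (\<lambda>a. v + a) ` A i) (A i)) \<longlongrightarrow> 1) (net_filter le)"
    unfolding cond_ii_def by blast
  define B where "B i = (\<Inter>v\<in>Ov. (\<lambda>a. v + a) ` A i)" for i
  have Bc: "closed (B i)" for i
    unfolding B_def by (intro closed_INT ballI closed_transl compact_imp_closed cA')
  have BA: "B i \<subseteq> A i" for i unfolding B_def using Ov(2) by auto
  show ?thesis unfolding strong_folner_net_def
  proof (intro ballI)
    fix K :: "'g set" assume K: "K \<in> cK"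
    then have cK: "compact K" "K \<noteq> {}" by (auto simp: cK_iff)
    have cov: "setinv K \<subseteq> (\<Union>g\<in>setinv K. (\<lambda>x. g + x) ` Ov)"
    proof
      fix g assume "g \<in> setinv K"
      moreover have "g \<in> (\<lambda>x. g + x) ` Ov" using Ov(2) by (auto intro: image_eqI[of _ _ 0])
      ultimately show "g \<in> (\<Union>g\<in>setinv K. (\<lambda>x. g + x) ` Ov)" by blast
    qed
    obtain C where C: "C \<subseteq> setinv K" "finite C" "setinv K \<subseteq> (\<Union>g\<in>C. (\<lambda>x. g + x) ` Ov)"
      by (rule compactE_image[OF compact_setinv[OF cK(1)] _ cov]) (auto intro: open_transl[OF Ov(1)])
    define Y where "Y i g = folner_bd {g} (A i) \<union> (\<lambda>x. g + x) ` (A i - B i)" for i g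
    have inc: "strong_bd K (A i) \<subseteq> folner_bd (setinv K) (A i) \<union> (\<Union>g\<in>C. Y i g)" for i
    proof
      fix x assume "x \<in> strong_bd K (A i)"
      then obtain k k' where k: "k \<in> K" "k + x \<in> A i" "k' \<in> K" "k' + x \<notin> A i"
        by (auto simp: strong_bd_iff)
      show "x \<in> folner_bd (setinv K) (A i) \<union> (\<Union>g\<in>C. Y i g)"
      proof (cases "x \<in> A i")
        case False
        have "x \<in> setmul (setinv K) (A i)" using k unfolding setmul_inv_iff by auto
        then show ?thesis using False unfolding folner_bd_def by auto
      next
        case True
        have "-k' \<in> setinv K" using k(3) by (rule setinvI)
        then obtain g ov where g: "g \<in> C" "ov \<in> Ov" "-k' = g + ov" using C(3) by blast
        have "x \<in> Y i g"
        proof (cases "x \<in> (\<lambda>a. g + a) ` A i")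
          case False
          then have "x \<notin> setmul {g} (A i)" by (auto simp: setmul_iff)
          then show ?thesis using True unfolding Y_def folner_bd_def by auto
        next
          case True2: True
          then obtain a where a: "a \<in> A i" "x = g + a" by auto
          have "a \<notin> B i"
          proof
            assume "a \<in> B i"
            then have "a \<in> (\<lambda>b. ov + b) ` A i" using g(2) unfolding B_def by blast
            then obtain b where b: "b \<in> A i" "a = ov + b" by auto
            have "x = -k' + b" using g(3) a(2) b(2) by (simp add: add.assoc)
            then have "k' + x = b" by (simp add: neg_plus_eq_iff)
            then show False using k(4) b(1) by simp
          qed
          then have "x \<in> (\<lambda>x. g + x) ` (A i - B i)" using a by auto
          then show ?thesis unfolding Y_def by auto
        qed
        then show ?thesis using g(1) by auto
      qed
    qed
    have bF: "bnd (folner_bd Q (A i))" if "compact Q" for Q i by (rule bnd_folner[OF that cA'])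
    have bT: "bnd ((\<lambda>x. g + x) ` (A i - B i))" for g i
    proof (rule bnd_subset[OF bnd_compact[OF compact_setmul[OF compact_sing cA']]])
      show "(\<lambda>x. g + x) ` (A i - B i) \<subseteq> setmul {g} (A i)" by (auto simp: setmul_iff)
    qed
    have bY: "bnd (Y i g)" for i g unfolding Y_def by (intro bnd_Un bF bT compact_sing)
    have le: "rel m (strong_bd K (A i)) (A i) \<le> rel m (folner_bd (setinv K) (A i)) (A i)
        + (\<Sum>g\<in>C. rel m (folner_bd {g} (A i)) (A i) + (1 - rel m (B i) (A i)))" for i
    proof -
      have "rel m (strong_bd K (A i)) (A i) \<le> rel m (folner_bd (setinv K) (A i)) (A i) + rel m (\<Union>g\<in>C. Y i g) (A i)"
        by (rule rel_Un[OF H inc]) (auto intro!: bF compact_setinv cK bnd_UN C(2) bY)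
      also have "rel m (\<Union>g\<in>C. Y i g) (A i) \<le> (\<Sum>g\<in>C. rel m (Y i g) (A i))"
        by (rule rel_UN[OF H C(2)]) (auto intro: bY)
      also have "\<dots> \<le> (\<Sum>g\<in>C. rel m (folner_bd {g} (A i)) (A i) + (1 - rel m (B i) (A i)))"
      proof (rule sum_mono)
        fix g assume "g \<in> C"
        have "rel m (Y i g) (A i) \<le> rel m (folner_bd {g} (A i)) (A i) + rel m ((\<lambda>x. g + x) ` (A i - B i)) (A i)"
          unfolding Y_def by (rule rel_Un[OF H order_refl bF bT]) simp
        then show "rel m (Y i g) (A i) \<le> rel m (folner_bd {g} (A i)) (A i) + (1 - rel m (B i) (A i))"
          using rel_transl_diff[OF H _ Bc BA] Ai by simp
      qed
      finally show ?thesis by simp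
    qed
    have t1: "((\<lambda>i. rel m (folner_bd (setinv K) (A i)) (A i)) \<longlongrightarrow> 0) (net_filter le)"
      using fol cK_setinv[OF K] unfolding folner_net_def by blast
    have t2: "((\<lambda>i. rel m (folner_bd {g} (A i)) (A i)) \<longlongrightarrow> 0) (net_filter le)" for g
      using fol cK_sing unfolding folner_net_def by blast
    have t3: "((\<lambda>i. 1 - rel m (B i) (A i)) \<longlongrightarrow> 1 - 1) (net_filter le)"
      using tB unfolding B_def[symmetric] by (intro tendsto_diff tendsto_const)
    have "((\<lambda>i. rel m (folner_bd (setinv K) (A i)) (A i)
        + (\<Sum>g\<in>C. rel m (folner_bd {g} (A i)) (A i) + (1 - rel m (B i) (A i)))) \<longlongrightarrow> 0 + (\<Sum>g\<in>C. 0 + (1 - 1))) (net_filter le)"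
      by (intro tendsto_add t1 tendsto_sum t2 t3)
    then have tr: "((\<lambda>i. rel m (folner_bd (setinv K) (A i)) (A i)
        + (\<Sum>g\<in>C. rel m (folner_bd {g} (A i)) (A i) + (1 - rel m (B i) (A i)))) \<longlongrightarrow> 0) (net_filter le)"
      by simp
    show "((\<lambda>i. rel m (strong_bd K (A i)) (A i)) \<longlongrightarrow> 0) (net_filter le)"
    proof (rule tendsto_sandwich[OF _ _ tendsto_const tr])
      show "\<forall>\<^sub>F i in net_filter le. 0 \<le> rel m (strong_bd K (A i)) (A i)"
        by (intro always_eventually allI rel_nonneg)
      show "\<forall>\<^sub>F i in net_filter le. rel m (strong_bd K (A i)) (A i) \<le> rel m (folner_bd (setinv K) (A i)) (A i)
        + (\<Sum>g\<in>C. rel m (folner_bd {g} (A i)) (A i) + (1 - rel m (B i) (A i)))"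
        by (intro always_eventually allI le)
    qed
  qed
qed

lemma discrete_ii:
  assumes "\<forall>x::'g. open {x}" "folner_net m le A"
  shows "cond_ii m le A"
  unfolding cond_ii_def
  using assms relA by (intro conjI exI[of _ "{0}"]) auto

end


theorem proposition5p7:
  fixes m :: "'g::{topological_group_add,t2_space} measure"
    and le :: "'i \<Rightarrow> 'i \<Rightarrow> bool"
    and A :: "'i \<Rightarrow> 'g set"
  assumes "locally_compact_group TYPE('g)"
    and "left_haar_measure m"
    and "amenable m"
    and "directed_po le"
    and "\<forall>i. A i \<in> cKp m"
  shows "(strong_folner_net m le A \<longleftrightarrow> cond_ii m le A)
    \<and> (strong_folner_net m le A \<longleftrightarrow> cond_iii m le A)
    \<and> (strong_folner_net m le A \<longleftrightarrow> cond_iv cK m le A)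
    \<and> (strong_folner_net m le A \<longleftrightarrow> cond_v cK m le A)
    \<and> (strong_folner_net m le A \<longleftrightarrow> cond_vi cK m le A)
    \<and> (strong_folner_net m le A \<longleftrightarrow> cond_iv cKs0 m le A)
    \<and> (strong_folner_net m le A \<longleftrightarrow> cond_v cKs0 m le A)
    \<and> (strong_folner_net m le A \<longleftrightarrow> cond_vi cKs0 m le A)
    \<and> (vanhove_net m le A \<longleftrightarrow> strong_folner_net m le A)
    \<and> ((\<forall>x::'g. open {x}) \<longrightarrow> folner_net m le A \<longrightarrow> strong_folner_net m le A)"
proof -
  note LC = assms(1) and H = assms(2) and Ai = assms(5)
  obtain V U :: "'g set" where VU: "open V" "0 \<in> V" "V \<subseteq> U" "compact U"
    using lc_nbhd[OF LC] by blast
  have S1: "cK \<subseteq> (cK :: 'g set set)" "\<forall>K\<in>(cK :: 'g set set). sym0 K \<in> cK"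
    using sym0_cK cK_compact by blast+
  have S2: "cKs0 \<subseteq> (cK :: 'g set set)" "\<forall>K\<in>(cK :: 'g set set). sym0 K \<in> cKs0"
    using cKs0_cK sym0_cKs0 cK_compact by blast+
  have ii: "strong_folner_net m le A \<longleftrightarrow> cond_ii m le A"
    using strong_iii[OF H Ai] iii_ii[OF H Ai LC] ii_strong[OF H Ai] by blast
  have iii: "strong_folner_net m le A \<longleftrightarrow> cond_iii m le A"
    using strong_iii[OF H Ai] iii_ii[OF H Ai LC] ii_strong[OF H Ai] by blast
  have iv1: "strong_folner_net m le A \<longleftrightarrow> cond_iv cK m le A"
    using strong_iv[OF H Ai _ S1(1)] iv_strong[OF H Ai _ S1(2)] by blast
  have v1: "strong_folner_net m le A \<longleftrightarrow> cond_v cK m le A"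
    using strong_v[OF H Ai _ S1(1) VU] v_strong[OF H Ai _ S1(2)] by blast
  have vi1: "strong_folner_net m le A \<longleftrightarrow> cond_vi cK m le A"
    using strong_vi[OF H Ai _ S1(1)] vi_strong[OF H Ai _ S1(2)] by blast
  have iv2: "strong_folner_net m le A \<longleftrightarrow> cond_iv cKs0 m le A"
    using strong_iv[OF H Ai _ S2(1)] iv_strong[OF H Ai _ S2(2)] by blast
  have v2: "strong_folner_net m le A \<longleftrightarrow> cond_v cKs0 m le A"
    using strong_v[OF H Ai _ S2(1) VU] v_strong[OF H Ai _ S2(2)] by blast
  have vi2: "strong_folner_net m le A \<longleftrightarrow> cond_vi cKs0 m le A"
    using strong_vi[OF H Ai _ S2(1)] vi_strong[OF H Ai _ S2(2)] by blast
  have vh: "vanhove_net m le A \<longleftrightarrow> strong_folner_net m le A"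
  proof
    assume "vanhove_net m le A" then show "strong_folner_net m le A" by (rule vanhove_strong[OF H Ai])
  next
    assume s: "strong_folner_net m le A"
    show "vanhove_net m le A" unfolding vanhove_net_def
      using strong_vanhove[OF H Ai s VU] by (auto simp: cK_iff)
  qed
  have disc: "(\<forall>x::'g. open {x}) \<longrightarrow> folner_net m le A \<longrightarrow> strong_folner_net m le A"
    using discrete_ii[OF H Ai] ii_strong[OF H Ai] by blast
  show ?thesis using ii iii iv1 v1 vi1 iv2 v2 vi2 vh disc by blast
qed

end
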